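(* Assume $\ker(K)\cap\ker(D)=\{0\}$ and fix $\delta\ge0$ and data $y^\delta$. Let $\{\Psi_k\}_{k\in\mathbb{N}}$ be reconstructors and $\Psi$ a reconstructor such that $\sup_{y\in\mathcal{Y}^\delta}\|\Psi_k(y)-\Psi(y)\|_1\to0$ as $k\to\infty$, where $\mathcal{Y}^\delta=\{y\in\mathbb{R}^m:\inf_{x\in\mathcal{X}}\|Kx-y\|_2\le\delta\}$. For each $k$ let $x^*_{\Psi_k,\delta}$ be the unique minimizer over $\mathcal{X}$ of $\mathcal{J}_{\Psi_k,\delta}(x)=\|Kx-y^\delta\|_2^2+\lambda\|w(\Psi_k(y^\delta))\odot|Dx|\|_1$. Then the sequence $\{x^*_{\Psi_k,\delta}\}_{k\in\mathbb{N}}$ is bounded.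
   Context: Let $K\in\mathbb{R}^{m\times n}$ with $m\le n$, and let $D_h,D_v\in\mathbb{R}^{n\times n}$ be the discrete horizontal and vertical difference operators; $Dx=\begin{bmatrix}D_hx\\ D_vx\end{bmatrix}\in\mathbb{R}^{2n}$, and $|Dx|\in\mathbb{R}^n$, $(|Dx|)_i=\sqrt{(D_hx)_i^2+(D_vx)_i^2}$. $\mathcal{X}=\{x\in\mathbb{R}^n: x_i\ge 0\ \forall i\}$. Fix $\lambda>0$, $\eta>0$, $p\in(0,1)$, and for $\tilde x\in\mathbb{R}^n$ define $(w(\tilde{x}))_i=\big(\eta/\sqrt{\eta^2+(|D\tilde{x}|)_i^2}\big)^{1-p}$. A reconstructor is a Lipschitz continuous map $\Psi:\mathbb{R}^m\to\mathbb{R}^n$. The data is $y^\delta=Kx^{GT}+e$ with $x^{GT}\in\mathcal{X}$ and $\|e\|_2\le\delta$. $\odot$ is the entrywise product. *)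

theory Defs
  imports "HOL-Analysis.Analysis"
begin

definition Xpos :: "(real ^ 'n) set" where
  "Xpos = {x. \<forall>i. x $ i \<ge> 0}"

definition absD :: "real ^ 'n ^ 'n \<Rightarrow> real ^ 'n ^ 'n \<Rightarrow> real ^ 'n \<Rightarrow> real ^ 'n" where
  "absD Dh Dv x = (\<chi> i. sqrt (((Dh *v x) $ i)\<^sup>2 + ((Dv *v x) $ i)\<^sup>2))"

definition weight :: "real \<Rightarrow> real \<Rightarrow> real ^ 'n ^ 'n \<Rightarrow> real ^ 'n ^ 'n \<Rightarrow> real ^ 'n \<Rightarrow> real ^ 'n" where
  "weight \<eta> p Dh Dv xt =
     (\<chi> i. (\<eta> / sqrt (\<eta>\<^sup>2 + ((absD Dh Dv xt) $ i)\<^sup>2)) powr (1 - p))"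

definition norm1 :: "real ^ 'n \<Rightarrow> real" where
  "norm1 x = (\<Sum>i\<in>UNIV. \<bar>x $ i\<bar>)"

definition Jfun :: "real ^ 'n ^ 'm \<Rightarrow> real ^ 'n ^ 'n \<Rightarrow> real ^ 'n ^ 'n \<Rightarrow> real \<Rightarrow> real \<Rightarrow> real
                    \<Rightarrow> (real ^ 'm \<Rightarrow> real ^ 'n) \<Rightarrow> real ^ 'm \<Rightarrow> real ^ 'n \<Rightarrow> real" where
  "Jfun K Dh Dv lam \<eta> p Psi y x =
     (norm (K *v x - y))\<^sup>2
     + lam * norm1 (weight \<eta> p Dh Dv (Psi y) * absD Dh Dv x)"

definition Ydelta :: "real ^ 'n ^ 'm \<Rightarrow> real \<Rightarrow> (real ^ 'm) set" where
  "Ydelta K \<delta> = {y. (INF x\<in>Xpos. norm (K *v x - y)) \<le> \<delta>}"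

end

theory Submission
  imports Defs
begin

lemma absD_nonneg: "absD Dh Dv x $ i \<ge> 0"
  by (simp add: absD_def)

lemma absD_le: "absD Dh Dv z $ i \<le> norm (Dh *v z) + norm (Dv *v z)"
proof -
  have "sqrt (((Dh *v z) $ i)\<^sup>2 + ((Dv *v z) $ i)\<^sup>2) \<le> \<bar>(Dh *v z) $ i\<bar> + \<bar>(Dv *v z) $ i\<bar>"
    by (metis abs_ge_zero real_sqrt_abs sqrt_sum_squares_le_sum power2_abs)
  also have "\<dots> \<le> norm (Dh *v z) + norm (Dv *v z)"
    using component_le_norm_cart by (intro add_mono) auto
  finally show ?thesis by (simp add: absD_def)
qed

lemma Dh_le_absD: "\<bar>(Dh *v z) $ i\<bar> \<le> absD Dh Dv z $ i"
  by (simp add: absD_def real_le_rsqrt)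

lemma Dv_le_absD: "\<bar>(Dv *v z) $ i\<bar> \<le> absD Dh Dv z $ i"
  by (simp add: absD_def real_le_rsqrt)

lemma normDh_le: "norm (Dh *v z) \<le> (\<Sum>i\<in>UNIV. absD Dh Dv z $ i)"
  by (rule order_trans[OF norm_le_l1_cart sum_mono]) (rule Dh_le_absD)

lemma normDv_le: "norm (Dv *v z) \<le> (\<Sum>i\<in>UNIV. absD Dh Dv z $ i)"
  by (rule order_trans[OF norm_le_l1_cart sum_mono]) (rule Dv_le_absD)

lemma weight_lower:
  assumes eta: "\<eta> > 0" and p: "p \<le> 1" and A: "absD Dh Dv z $ i \<le> A"
  shows "weight \<eta> p Dh Dv z $ i \<ge> (\<eta> / sqrt (\<eta>\<^sup>2 + A\<^sup>2)) powr (1 - p)"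
proof -
  have a0: "0 \<le> absD Dh Dv z $ i" by (rule absD_nonneg)
  have "(absD Dh Dv z $ i)\<^sup>2 \<le> A\<^sup>2" using a0 A by (simp add: power_mono)
  hence s: "sqrt (\<eta>\<^sup>2 + (absD Dh Dv z $ i)\<^sup>2) \<le> sqrt (\<eta>\<^sup>2 + A\<^sup>2)" by simp
  have pos: "0 < sqrt (\<eta>\<^sup>2 + (absD Dh Dv z $ i)\<^sup>2)" using eta
    by (simp add: add_pos_nonneg)
  have "\<eta> / sqrt (\<eta>\<^sup>2 + A\<^sup>2) \<le> \<eta> / sqrt (\<eta>\<^sup>2 + (absD Dh Dv z $ i)\<^sup>2)"
    using eta s pos by (intro divide_left_mono) auto
  moreover have "0 \<le> \<eta> / sqrt (\<eta>\<^sup>2 + A\<^sup>2)" using eta by simp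
  ultimately show ?thesis
    unfolding weight_def using p by (simp add: powr_mono2)
qed

lemma norm1_tri: "norm1 a \<le> norm1 (a - b) + norm1 b"
  unfolding norm1_def sum.distrib[symmetric]
  by (rule sum_mono) (metis abs_triangle_ineq diff_add_cancel vector_minus_component)

lemma norm_le_norm1: "norm z \<le> norm1 z"
  unfolding norm1_def by (rule norm_le_l1_cart)

lemma weight_nonneg: "weight \<eta> p Dh Dv z $ i \<ge> 0"
  by (simp add: weight_def)

theorem lemma10:
  fixes K :: "real ^ 'n ^ 'm" and Dh Dv :: "real ^ 'n ^ 'n"
    and lam \<eta> p \<delta> :: real
    and xGT :: "real ^ 'n" and e y\<delta> :: "real ^ 'm"
    and Psis :: "nat \<Rightarrow> real ^ 'm \<Rightarrow> real ^ 'n" and Psi :: "real ^ 'm \<Rightarrow> real ^ 'n"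
    and xs :: "nat \<Rightarrow> real ^ 'n"
  assumes mn: "CARD('m) \<le> CARD('n)"
    and lam: "lam > 0" and eta: "\<eta> > 0" and p: "0 < p" "p < 1"
    and ker: "\<And>x. K *v x = 0 \<Longrightarrow> Dh *v x = 0 \<Longrightarrow> Dv *v x = 0 \<Longrightarrow> x = 0"
    and delta: "\<delta> \<ge> 0"
    and data: "y\<delta> = K *v xGT + e" "xGT \<in> Xpos" "norm e \<le> \<delta>"
    and lipk: "\<And>k. \<exists>L. L-lipschitz_on UNIV (Psis k)"
    and lip: "\<exists>L. L-lipschitz_on UNIV Psi"
    and unif: "\<forall>\<epsilon>>0. \<exists>N. \<forall>k\<ge>N. \<forall>y\<in>Ydelta K \<delta>. norm1 (Psis k y - Psi y) \<le> \<epsilon>"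
    and minim: "\<And>k. xs k \<in> Xpos \<and>
                 (\<forall>x\<in>Xpos. Jfun K Dh Dv lam \<eta> p (Psis k) y\<delta> (xs k) \<le> Jfun K Dh Dv lam \<eta> p (Psis k) y\<delta> x) \<and>
                 (\<forall>z\<in>Xpos. (\<forall>x\<in>Xpos. Jfun K Dh Dv lam \<eta> p (Psis k) y\<delta> z \<le> Jfun K Dh Dv lam \<eta> p (Psis k) y\<delta> x)
                           \<longrightarrow> z = xs k)"
  shows "bounded (range xs)"
proof -
  define R where "R = (norm y\<delta>)\<^sup>2"
  define W where "W k = weight \<eta> p Dh Dv (Psis k y\<delta>)" for k
  define G where "G x = absD Dh Dv x" for x
  have J0: "Jfun K Dh Dv lam \<eta> p (Psis k) y\<delta> 0 = R" for k
    by (simp add: R_def Jfun_def absD_def norm1_def)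
  have X0: "(0::real^'n) \<in> Xpos" by (simp add: Xpos_def)
  have Jle: "Jfun K Dh Dv lam \<eta> p (Psis k) y\<delta> (xs k) \<le> R" for k
    using minim[of k] X0 J0 by metis
  have n1nn: "norm1 v \<ge> 0" for v by (simp add: norm1_def sum_nonneg)
  have Jx: "Jfun K Dh Dv lam \<eta> p (Psis k) y\<delta> (xs k) = (norm (K *v xs k - y\<delta>))\<^sup>2 + lam * norm1 (W k * G (xs k))" for k
    by (simp add: Jfun_def W_def G_def)
  have lnn: "lam * norm1 (W k * G (xs k)) \<ge> 0" for k
    using lam n1nn[of "W k * G (xs k)"] by simp
  have fit: "(norm (K *v xs k - y\<delta>))\<^sup>2 \<le> R" for k
    using Jle[of k] lnn[of k] unfolding Jx by linarith
  have reg: "lam * norm1 (W k * G (xs k)) \<le> R" for k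
    using Jle[of k] zero_le_power2[of "norm (K *v xs k - y\<delta>)"] unfolding Jx by linarith
  have Kb: "norm (K *v xs k) \<le> 2 * norm y\<delta>" for k
  proof -
    have "norm (K *v xs k - y\<delta>) \<le> norm y\<delta>"
      using fit[of k] unfolding R_def by (rule power2_le_imp_le) simp
    then show ?thesis using norm_triangle_ineq2[of "K *v xs k" y\<delta>]
      by linarith
  qed
  have yY: "y\<delta> \<in> Ydelta K \<delta>"
  proof -
    have "(INF x\<in>Xpos. norm (K *v x - y\<delta>)) \<le> norm (K *v xGT - y\<delta>)"
      by (rule cINF_lower[OF _ data(2)]) (rule bdd_belowI[of _ 0], auto)
    also have "\<dots> = norm e" using data(1) by (simp add: norm_minus_commute)
    finally show ?thesis using data(3) by (simp add: Ydelta_def)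
  qed
  obtain N where N: "\<And>k. k \<ge> N \<Longrightarrow> norm1 (Psis k y\<delta> - Psi y\<delta>) \<le> 1"
    using unif yY by (metis zero_less_one)
  obtain C1 where C1: "C1 > 0" "\<And>z. norm (Dh *v z) \<le> norm z * C1"
    using bounded_linear.pos_bounded[OF matrix_vector_mul_bounded_linear[of Dh]] by blast
  obtain C2 where C2: "C2 > 0" "\<And>z. norm (Dv *v z) \<le> norm z * C2"
    using bounded_linear.pos_bounded[OF matrix_vector_mul_bounded_linear[of Dv]] by blast
  define P where "P = 1 + norm1 (Psi y\<delta>)"
  define A where "A = P * C1 + P * C2"
  define c where "c = (\<eta> / sqrt (\<eta>\<^sup>2 + A\<^sup>2)) powr (1 - p)"
  have cpos: "c > 0" unfolding c_def using eta by simp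
  have Wc: "W k $ i \<ge> c" if k: "k \<ge> N" for k i
  proof -
    have "norm (Psis k y\<delta>) \<le> P"
      using norm_le_norm1[of "Psis k y\<delta>"] norm1_tri[of "Psis k y\<delta>" "Psi y\<delta>"] N[OF k]
      unfolding P_def by linarith
    hence "norm (Dh *v Psis k y\<delta>) \<le> P * C1" "norm (Dv *v Psis k y\<delta>) \<le> P * C2"
      using C1 C2 by (metis mult.commute mult_left_mono order_trans less_imp_le)+
    hence "absD Dh Dv (Psis k y\<delta>) $ i \<le> A"
      using absD_le[of Dh Dv "Psis k y\<delta>" i] unfolding A_def by linarith
    thus ?thesis unfolding W_def c_def using p by (intro weight_lower[OF eta]) auto
  qed
  have Gsum: "(\<Sum>i\<in>UNIV. G (xs k) $ i) \<le> R / (lam * c)" if k: "k \<ge> N" for k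
  proof -
    have "c * (\<Sum>i\<in>UNIV. G (xs k) $ i) = (\<Sum>i\<in>UNIV. c * G (xs k) $ i)"
      by (simp add: sum_distrib_left)
    also have "\<dots> \<le> (\<Sum>i\<in>UNIV. W k $ i * G (xs k) $ i)"
      by (rule sum_mono, rule mult_right_mono) (use Wc[OF k] in \<open>auto simp: G_def absD_nonneg\<close>)
    also have "\<dots> = norm1 (W k * G (xs k))"
      unfolding norm1_def W_def G_def by (simp add: abs_mult absD_nonneg weight_nonneg)
    also have "\<dots> \<le> R / lam" using reg[of k] lam by (simp add: field_simps)
    finally show ?thesis using cpos lam by (simp add: field_simps)
  qed
  define f where "f x = (K *v x, (Dh *v x, Dv *v x))" for x
  have linf: "linear f"
    unfolding f_def by (rule linearI) (auto simp: matrix_vector_right_distrib matrix_vector_mult_scaleR)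
  have injf: "inj f"
    unfolding linear_injective_0[OF linf] f_def using ker by (simp add: zero_prod_def)
  obtain B where B: "B > 0" "\<And>x. B * norm x \<le> norm (f x)"
    using linear_inj_bounded_below_pos[OF linf injf] by blast
  define M where "M = (2 * norm y\<delta> + 2 * (R / (lam * c))) / B"
  have bndN: "norm (xs k) \<le> M" if k: "k \<ge> N" for k
  proof -
    have "norm (f (xs k)) \<le> norm (K *v xs k) + (norm (Dh *v xs k) + norm (Dv *v xs k))"
      unfolding f_def by (meson add_left_mono norm_Pair_le order_trans)
    also have "\<dots> \<le> 2 * norm y\<delta> + 2 * (R / (lam * c))"
      using Kb[of k] Gsum[OF k] normDh_le[of Dh "xs k" Dv] normDv_le[of Dv "xs k" Dh]
      unfolding G_def by linarith
    finally show ?thesis using B(2)[of "xs k"] B(1) unfolding M_def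
      by (simp add: field_simps)
  qed
  have "range xs \<subseteq> xs ` {..<N} \<union> xs ` {N..}"
  proof
    fix z assume "z \<in> range xs"
    then obtain j where "z = xs j" by auto
    then show "z \<in> xs ` {..<N} \<union> xs ` {N..}" by (cases "j < N") auto
  qed
  moreover have "bounded (xs ` {N..})"
    unfolding bounded_iff using bndN by auto
  moreover have "bounded (xs ` {..<N})" by (rule finite_imp_bounded) simp
  ultimately show ?thesis by (meson bounded_Un bounded_subset)
qed

end
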